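(* Let $n\ge 1$ and let $\mathcal{C}_2\subseteq\mathbb{F}_2^n$ be a binary linear code. Let $\tilde{\mathcal{C}}_3=\{x\in\mathbb{F}_2^n:\sum_{i=1}^n x_i\equiv 0 \pmod 2\}$ and $\overline{\mathcal{C}}_3=\{y\in\mathbb{F}_2^n:\sum_{i=1}^n y_i\equiv 1 \pmod 2\}$, and define the code $\mathcal{C}\subseteq\mathbb{F}_2^{3n}$ by $$\mathcal{C}=\{(0,\dots,0,\,a,\,x): a\in\mathcal{C}_2,\ x\in\tilde{\mathcal{C}}_3\}\ \cup\ \{(1,\dots,1,\,a,\,y): a\in\mathcal{C}_2,\ y\in\overline{\mathcal{C}}_3\},$$ where each codeword is written as $(c_1,c_2,c_3)$ with $c_1,c_2,c_3\in\mathbb{F}_2^n$ (so the first block $c_1$ lies in the repetition code $\{(0,\dots,0),(1,\dots,1)\}$). Define $$\Gamma_{C^\star}=\{c_1+2c_2+4c_3+8z:\ (c_1,c_2,c_3)\in\mathcal{C},\ z\in\mathbb{Z}^n\}\subseteq\mathbb{R}^n,$$ where vectors of $\mathbb{F}_2^n$ are identified with vectors in $\{0,1\}^n\subseteq\mathbb{R}^n$ and the operations are real addition and scalar multiplication. Then $\Gamma_{C^\star}$ is a lattice if and only if $\mathcal{C}_2$ is self-orthogonal and contains the all-ones vector $(1,\dots,1)$.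
   Context: A lattice in $\mathbb{R}^n$ is the set of all integer linear combinations of a set of linearly independent vectors of $\mathbb{R}^n$. For $c,\tilde c\in\mathbb{F}_2^n$, $\langle c,\tilde c\rangle=\sum_{i=1}^n c_i\tilde c_i \bmod 2$, and $\mathcal{C}^\perp=\{c\in\mathbb{F}_2^n:\langle c,\tilde c\rangle=0 \text{ for all }\tilde c\in\mathcal{C}\}$. A binary code $\mathcal{C}$ is self-orthogonal if $\mathcal{C}\subseteq\mathcal{C}^\perp$. (Here $\mathcal{C}_2$ being linear is equivalent to the code $\mathcal{C}$ above being linear.) *)

theory Defs
  imports "HOL-Analysis.Analysis" "HOL-Library.Z2"
begin

text \<open>Vectors of F_2^n are modelled as bit^'n (bit = field F_2 from HOL-Library.Z2),
  vectors of R^n as real^'n; the dimension n is the (finite, nonempty) index type 'n.\<close>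

definition binary_linear_code :: "(bit^'n) set \<Rightarrow> bool" where
  "binary_linear_code C \<longleftrightarrow> 0 \<in> C \<and> (\<forall>a\<in>C. \<forall>b\<in>C. \<forall>s::bit. s *s a + b \<in> C)"

definition binary_inner :: "bit^'n \<Rightarrow> bit^'n \<Rightarrow> bit" where
  "binary_inner c d = (\<Sum>i\<in>UNIV. c$i * d$i)"

definition binary_dual :: "(bit^'n) set \<Rightarrow> (bit^'n) set" where
  "binary_dual C = {c. \<forall>d\<in>C. binary_inner c d = 0}"

definition self_orthogonal :: "(bit^'n) set \<Rightarrow> bool" where
  "self_orthogonal C \<longleftrightarrow> C \<subseteq> binary_dual C"

definition is_lattice :: "(real^'n) set \<Rightarrow> bool" where
  "is_lattice L \<longleftrightarrow> (\<exists>B. independent B \<and> finite B \<and>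
      L = {(\<Sum>b\<in>B. of_int (k b) *\<^sub>R b) | k. True})"

definition even_weight :: "(bit^'n) set" where
  "even_weight = {x. (\<Sum>i\<in>UNIV. x$i) = 0}"

definition odd_weight :: "(bit^'n) set" where
  "odd_weight = {y. (\<Sum>i\<in>UNIV. y$i) = 1}"

definition code_C :: "(bit^'n) set \<Rightarrow> ((bit^'n) \<times> (bit^'n) \<times> (bit^'n)) set" where
  "code_C C2 = {(0 :: bit^'n, a, x) | a x. a \<in> C2 \<and> x \<in> even_weight}
             \<union> {((\<chi> i. (1::bit)), a, y) | a y. a \<in> C2 \<and> y \<in> odd_weight}"

definition Gamma_Cstar :: "((bit^'n) \<times> (bit^'n) \<times> (bit^'n)) set \<Rightarrow> (real^'n) set" where
  "Gamma_Cstar C = {(\<chi> i. of_bit (c1$i) + 2 * of_bit (c2$i) + 4 * of_bit (c3$i) + 8 * of_int (z$i))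
              | c1 c2 c3 z. (c1, c2, c3) \<in> C \<and> (z :: int^'n) \<in> UNIV}"

end

theory Submission
  imports Defs
begin


definition zgrp :: "(real^'n) set \<Rightarrow> bool" where
  "zgrp S \<longleftrightarrow> 0 \<in> S \<and> (\<forall>x\<in>S. \<forall>y\<in>S. x - y \<in> S)"

definition ispan :: "(real^'n) set \<Rightarrow> (real^'n) set" where
  "ispan B = {(\<Sum>b\<in>B. of_int (k b) *\<^sub>R b) | k. True}"

lemma zgrp_neg: "zgrp S \<Longrightarrow> x \<in> S \<Longrightarrow> -x \<in> S"
  unfolding zgrp_def by (metis diff_0)
lemma zgrp_add: "zgrp S \<Longrightarrow> x \<in> S \<Longrightarrow> y \<in> S \<Longrightarrow> x + y \<in> S"
  using zgrp_neg[of S y] unfolding zgrp_def by (metis diff_minus_eq_add)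
lemma zgrp_nat: "zgrp S \<Longrightarrow> x \<in> S \<Longrightarrow> of_nat m *\<^sub>R x \<in> S"
proof (induction m)
  case 0 then show ?case by (simp add: zgrp_def)
next
  case (Suc m) then show ?case using zgrp_add[of S x "of_nat m *\<^sub>R x"] by (simp add: algebra_simps)
qed
lemma zgrp_int: "zgrp S \<Longrightarrow> x \<in> S \<Longrightarrow> of_int k *\<^sub>R x \<in> S"
proof (cases "k \<ge> 0")
  case True
  assume "zgrp S" "x \<in> S"
  then have "of_nat (nat k) *\<^sub>R x \<in> S" by (rule zgrp_nat)
  then show ?thesis using True by simp
next
  case False
  assume a: "zgrp S" "x \<in> S"
  then have "of_nat (nat (-k)) *\<^sub>R x \<in> S" by (rule zgrp_nat)
  then have "- (of_nat (nat (-k)) *\<^sub>R x) \<in> S" using a zgrp_neg by blast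
  then show ?thesis using False by simp
qed

lemma ispan_mem: assumes a: "b \<in> B" "finite B" shows "b \<in> ispan B"
proof -
  have "(\<Sum>x\<in>B. of_int (if x = b then 1 else 0) *\<^sub>R x) = (\<Sum>x\<in>B. if x = b then x else 0)"
    by (rule sum.cong) auto
  also have "\<dots> = b" using a by (simp add: sum.delta')
  finally show ?thesis unfolding ispan_def by (intro CollectI exI[of _ "\<lambda>x. if x = b then 1 else 0"]) simp
qed

lemma main_gen:
  fixes S :: "(real^'n) set"
  assumes "finite I" "zgrp S" "\<forall>v\<in>S. \<forall>i. v$i \<in> \<int>" "\<forall>v\<in>S. \<forall>i. i \<notin> I \<longrightarrow> v$i = 0"
  shows "\<exists>B. independent B \<and> finite B \<and> S = ispan B"
  using assms
proof (induction I arbitrary: S rule: finite_induct)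
  case empty
  then have "S = {0}" unfolding zgrp_def by (auto simp: vec_eq_iff)
  then show ?case by (intro exI[of _ "{}"]) (auto simp: ispan_def independent_empty)
next
  case (insert j I)
  define S0 where "S0 = {v\<in>S. v$j = 0}"
  have g0: "zgrp S0" using insert.prems(1) unfolding zgrp_def S0_def by auto
  have p2: "\<forall>v\<in>S0. \<forall>i. v$i \<in> \<int>" using insert.prems(2) unfolding S0_def by blast
  have p3: "\<forall>v\<in>S0. \<forall>i. i \<notin> I \<longrightarrow> v$i = 0"
  proof (intro ballI allI impI)
    fix v i assume "v \<in> S0" "i \<notin> I"
    then show "v$i = 0" using insert.prems(3) unfolding S0_def by (cases "i = j") auto
  qed
  obtain B0 where B0: "independent B0" "finite B0" "S0 = ispan B0"
    using insert.IH[OF g0 p2 p3] by blast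
  have B0S0: "B0 \<subseteq> S0" using B0 ispan_mem by blast
  show ?case
  proof (cases "\<forall>v\<in>S. v$j = 0")
    case True
    then have "S = S0" unfolding S0_def by auto
    then show ?thesis using B0 by auto
  next
    case False
    then obtain v where v: "v \<in> S" "v$j \<noteq> 0" by auto
    obtain m where m: "v$j = of_int m" using insert.prems(2) v by (metis Ints_cases)
    define w where "w = (if m > 0 then v else -v)"
    have "w \<in> S" using v zgrp_neg[OF insert.prems(1)] by (auto simp: w_def)
    moreover have "w$j = of_nat (nat \<bar>m\<bar>)" using m v by (auto simp: w_def)
    moreover have "nat \<bar>m\<bar> > 0" using m v by auto
    ultimately have ex: "\<exists>d. d > 0 \<and> (\<exists>u\<in>S. u$j = of_nat d)" by blast
    define d where "d = (LEAST d. d > 0 \<and> (\<exists>u\<in>S. u$j = of_nat d))"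
    have dP: "d > 0 \<and> (\<exists>u\<in>S. u$j = of_nat d)" unfolding d_def using LeastI_ex[OF ex] .
    then obtain u where u: "u \<in> S" "u$j = of_nat d" "d > 0" by auto
    have dmin: "\<And>e. 0 < e \<Longrightarrow> e < d \<Longrightarrow> \<not> (\<exists>u\<in>S. u$j = of_nat e)"
      unfolding d_def using not_less_Least by blast
    have uB0: "u \<notin> B0" using B0S0 u unfolding S0_def by auto
    have spanB0: "span B0 \<subseteq> {x. x$j = 0}"
    proof (rule span_minimal)
      show "B0 \<subseteq> {x. x$j = 0}" using B0S0 unfolding S0_def by blast
      show "subspace {x::real^'n. x$j = 0}" unfolding subspace_def by simp
    qed
    have indep: "independent (insert u B0)"
      
    proof -
      have "u \<notin> span B0" using spanB0 u by auto
      then show ?thesis using B0(1) uB0 by (simp add: independent_insert)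
    qed
    have "S = ispan (insert u B0)"
    proof
      show "S \<subseteq> ispan (insert u B0)"
      proof
        fix x assume x: "x \<in> S"
        obtain mx where mx: "x$j = of_int mx" using insert.prems(2) x by (metis Ints_cases)
        define q where "q = mx div int d"
        define r where "r = mx mod int d"
        have "x - of_int q *\<^sub>R u \<in> S"
          using x u zgrp_int[OF insert.prems(1)] insert.prems(1) unfolding zgrp_def by blast
        moreover have "(x - of_int q *\<^sub>R u)$j = of_int r"
        proof -
          have "(x - of_int q *\<^sub>R u)$j = real_of_int (mx - q * int d)" using mx u by simp
          moreover have "mx - q * int d = r" unfolding q_def r_def by (metis minus_div_mult_eq_mod)
          ultimately show ?thesis by simp
        qed
        moreover have "0 \<le> r" "r < int d" using u unfolding r_def by auto
        ultimately have "r = 0"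
        proof -
          assume a: "x - of_int q *\<^sub>R u \<in> S" "(x - of_int q *\<^sub>R u)$j = of_int r" "0 \<le> r" "r < int d"
          show "r = 0"
          proof (rule ccontr)
            assume "r \<noteq> 0"
            then have "0 < nat r" "nat r < d" using a by auto
            moreover have "(x - of_int q *\<^sub>R u)$j = of_nat (nat r)" using a by simp
            ultimately show False using dmin[of "nat r"] a(1) by blast
          qed
        qed
        with \<open>x - of_int q *\<^sub>R u \<in> S\<close> \<open>(x - of_int q *\<^sub>R u)$j = of_int r\<close>
        have "x - of_int q *\<^sub>R u \<in> S0" unfolding S0_def by auto
        then obtain k where k: "x - of_int q *\<^sub>R u = (\<Sum>b\<in>B0. of_int (k b) *\<^sub>R b)"
          using B0(3) unfolding ispan_def by auto
        define k' where "k' = k(u := q)"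
        have "(\<Sum>b\<in>insert u B0. of_int (k' b) *\<^sub>R b) = of_int q *\<^sub>R u + (\<Sum>b\<in>B0. of_int (k b) *\<^sub>R b)"
          using B0(2) uB0 unfolding k'_def by (simp add: sum.insert) (intro sum.cong, auto)
        also have "\<dots> = x" using k by (metis add.commute diff_add_cancel)
        finally show "x \<in> ispan (insert u B0)" unfolding ispan_def by (auto intro!: exI[of _ k'])
      qed
    next
      show "ispan (insert u B0) \<subseteq> S"
      proof
        fix x assume "x \<in> ispan (insert u B0)"
        then obtain k where k: "x = (\<Sum>b\<in>insert u B0. of_int (k b) *\<^sub>R b)" unfolding ispan_def by auto
        then have "x = of_int (k u) *\<^sub>R u + (\<Sum>b\<in>B0. of_int (k b) *\<^sub>R b)"
          using B0(2) uB0 by simp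
        moreover have "(\<Sum>b\<in>B0. of_int (k b) *\<^sub>R b) \<in> S" using B0(3) unfolding ispan_def S0_def by auto
        ultimately show "x \<in> S" using zgrp_add[OF insert.prems(1)] zgrp_int[OF insert.prems(1) u(1)] by auto
      qed
    qed
    then show ?thesis using indep B0(2) by auto
  qed
qed


lemma bit_cases: "(b::bit) = 0 \<or> b = 1" by auto
lemma odd_bit1[simp]: "odd (1::bit)" by simp
lemma ob1[simp]: "of_bit (1::bit) = 1" by simp

lemma coord_int: fixes p q a b x y :: bit and z z' :: int
  shows "\<exists>z''. (of_bit p + 2 * of_bit a + 4 * of_bit x + 8 * z) - (of_bit q + 2 * of_bit b + 4 * of_bit y + 8 * z')
   = of_bit (p+q) + 2 * of_bit (a+b+(1+p)*q) + 4 * of_bit (x+y+((1+a)*b + (1+a)*((1+p)*q) + b*((1+p)*q))) + 8 * z''"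
  using bit_cases[of p] bit_cases[of q] bit_cases[of a] bit_cases[of b] bit_cases[of x] bit_cases[of y]
  apply (elim disjE)
  apply (simp_all)
  apply presburger+
  done

lemma coord_real: fixes p q a b x y :: bit and z z' :: int
  shows "\<exists>z''::int. ((of_bit p + 2 * of_bit a + 4 * of_bit x + 8 * of_int z) - (of_bit q + 2 * of_bit b + 4 * of_bit y + 8 * of_int z') :: real)
   = of_bit (p+q) + 2 * of_bit (a+b+(1+p)*q) + 4 * of_bit (x+y+((1+a)*b + (1+a)*((1+p)*q) + b*((1+p)*q))) + 8 * of_int z''"
proof -
  obtain z'' where h: "(of_bit p + 2 * of_bit a + 4 * of_bit x + 8 * z) - (of_bit q + 2 * of_bit b + 4 * of_bit y + 8 * z')
   = (of_bit (p+q) + 2 * of_bit (a+b+(1+p)*q) + 4 * of_bit (x+y+((1+a)*b + (1+a)*((1+p)*q) + b*((1+p)*q))) + 8 * z'' :: int)"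
    using coord_int by blast
  have "real_of_int ((of_bit p + 2 * of_bit a + 4 * of_bit x + 8 * z) - (of_bit q + 2 * of_bit b + 4 * of_bit y + 8 * z'))
     = real_of_int (of_bit (p+q) + 2 * of_bit (a+b+(1+p)*q) + 4 * of_bit (x+y+((1+a)*b + (1+a)*((1+p)*q) + b*((1+p)*q))) + 8 * z'')"
    using h by simp
  then show ?thesis by (intro exI[of _ z'']) simp
qed

lemma dig_unique: fixes b1 b2 b3 c1 c2 c3 :: bit and z w :: int
  assumes "(of_bit b1 + 2 * of_bit b2 + 4 * of_bit b3 + 8 * of_int z :: real) = of_bit c1 + 2 * of_bit c2 + 4 * of_bit c3 + 8 * of_int w"
  shows "b1 = c1 \<and> b2 = c2 \<and> b3 = c3 \<and> z = w"
proof -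
  have "real_of_int (of_bit b1 + 2 * of_bit b2 + 4 * of_bit b3 + 8 * z) = real_of_int (of_bit c1 + 2 * of_bit c2 + 4 * of_bit c3 + 8 * w)"
    using assms by simp
  then have h: "(of_bit b1 + 2 * of_bit b2 + 4 * of_bit b3 + 8 * z :: int) = of_bit c1 + 2 * of_bit c2 + 4 * of_bit c3 + 8 * w"
    by (simp only: of_int_eq_iff)
  show ?thesis
  using h bit_cases[of b1] bit_cases[of b2] bit_cases[of b3] bit_cases[of c1] bit_cases[of c2] bit_cases[of c3]
  apply (elim disjE)
  apply (simp_all)
  apply presburger+
  done
qed

lemma lattice_ispan: "is_lattice L \<longleftrightarrow> (\<exists>B. independent B \<and> finite B \<and> L = ispan B)"
  unfolding is_lattice_def ispan_def by simp

lemma lattice_add: assumes "is_lattice L" "x \<in> L" "y \<in> L" shows "x + y \<in> L"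
proof -
  obtain B where B: "L = {(\<Sum>b\<in>B. of_int (k b) *\<^sub>R b) | k. True}" using assms(1) unfolding is_lattice_def by blast
  obtain k where k: "x = (\<Sum>b\<in>B. of_int (k b) *\<^sub>R b)" using assms(2) B by blast
  obtain k' where k': "y = (\<Sum>b\<in>B. of_int (k' b) *\<^sub>R b)" using assms(3) B by blast
  have "x + y = (\<Sum>b\<in>B. of_int ((\<lambda>b. k b + k' b) b) *\<^sub>R b)"
    unfolding k k' by (simp add: sum.distrib scaleR_add_left)
  then show ?thesis unfolding B by (intro CollectI exI[of _ "\<lambda>b. k b + k' b"]) simp
qed

lemma Gamma_mem: "v \<in> Gamma_Cstar C \<longleftrightarrow> (\<exists>c1 c2 c3 z. (c1,c2,c3) \<in> C \<and>
   v = (\<chi> i. of_bit (c1$i) + 2 * of_bit (c2$i) + 4 * of_bit (c3$i) + 8 * of_int (z$i)))"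
  unfolding Gamma_Cstar_def by blast

lemma Gamma_ints: "v \<in> Gamma_Cstar C \<Longrightarrow> v$i \<in> \<int>"
  unfolding Gamma_mem by auto



declare add_bit_eq_xor[simp del] mult_bit_eq_and[simp del]

lemma b11[simp]: "(1::bit) + 1 = 0" by (simp add: add_bit_eq_xor)
lemma bit_self_mult[simp]: "(x::bit) * x = x" using bit_cases[of x] by auto
lemma bit_self_add[simp]: "(x::bit) + x = 0" using bit_cases[of x] by auto

lemma so_inner: "self_orthogonal C2 \<Longrightarrow> c \<in> C2 \<Longrightarrow> d \<in> C2 \<Longrightarrow> (\<Sum>i\<in>UNIV. c$i * d$i) = 0"
  unfolding self_orthogonal_def binary_dual_def binary_inner_def by blast
lemma so_weight: "self_orthogonal C2 \<Longrightarrow> c \<in> C2 \<Longrightarrow> (\<Sum>i\<in>UNIV. c$i) = 0"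
  using so_inner[of C2 c c] by simp
lemma lin_add: "binary_linear_code C \<Longrightarrow> a \<in> C \<Longrightarrow> b \<in> C \<Longrightarrow> a + b \<in> C"
  unfolding binary_linear_code_def by (metis vector_smult_lid)
lemma code_C_iff: "(p,a,x) \<in> code_C C2 \<longleftrightarrow> (p = 0 \<and> a \<in> C2 \<and> x \<in> even_weight) \<or> (p = (\<chi> i. 1) \<and> a \<in> C2 \<and> x \<in> odd_weight)"
  unfolding code_C_def by auto

lemma sum4: "(\<Sum>i\<in>UNIV. (f i + g i + (h i + k i)::bit)) = (\<Sum>i\<in>UNIV. f i) + (\<Sum>i\<in>UNIV. g i) + ((\<Sum>i\<in>UNIV. h i) + (\<Sum>i\<in>UNIV. k i))"
  by (simp add: sum.distrib)
lemma sum5: "(\<Sum>i\<in>UNIV. (f i + g i + (h i + k i + l i)::bit)) = (\<Sum>i\<in>UNIV. f i) + (\<Sum>i\<in>UNIV. g i) + ((\<Sum>i\<in>UNIV. h i) + (\<Sum>i\<in>UNIV. k i) + (\<Sum>i\<in>UNIV. l i))"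
  by (simp add: sum.distrib)

lemma code_sub:
  fixes C2 :: "(bit^'n) set"
  assumes lin: "binary_linear_code C2" and so: "self_orthogonal C2" and one: "(\<chi> i. 1) \<in> C2"
    and P: "(p,a,xx) \<in> code_C C2" and Q: "(q,b,yy) \<in> code_C C2"
  shows "((\<chi> i. p$i + q$i), (\<chi> i. a$i + b$i + (1+p$i)*q$i),
     (\<chi> i. xx$i + yy$i + ((1+a$i)*b$i + (1+a$i)*((1+p$i)*q$i) + b$i*((1+p$i)*q$i)))) \<in> code_C C2"
proof -
  have aC: "a \<in> C2" and bC: "b \<in> C2" using P Q unfolding code_C_iff by auto
  have ab: "a + b \<in> C2" using lin_add[OF lin aC bC] .
  have ab1: "a + b + (\<chi> i. 1) \<in> C2" using lin_add[OF lin ab one] .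
  have ia: "(\<Sum>i\<in>UNIV. a$i) = 0" using so_weight[OF so aC] .
  have ib: "(\<Sum>i\<in>UNIV. b$i) = 0" using so_weight[OF so bC] .
  have iab: "(\<Sum>i\<in>UNIV. a$i * b$i) = 0" using so_inner[OF so aC bC] .
  have i1: "(\<Sum>i\<in>(UNIV::'n set). (1::bit)) = 0" using so_weight[OF so one] by simp
  have s0: "(\<Sum>i\<in>UNIV. xx$i + yy$i + (b$i + a$i*b$i)) = (\<Sum>i\<in>UNIV. xx$i) + (\<Sum>i\<in>UNIV. yy$i)"
    using sum4[of "\<lambda>i. xx$i" "\<lambda>i. yy$i" "\<lambda>i. b$i" "\<lambda>i. a$i*b$i"] ib iab by simp
  have s1: "(\<Sum>i\<in>UNIV. xx$i + yy$i + (1 + a$i + a$i*b$i)) = (\<Sum>i\<in>UNIV. xx$i) + (\<Sum>i\<in>UNIV. yy$i)"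
    using sum5[of "\<lambda>i. xx$i" "\<lambda>i. yy$i" "\<lambda>i. 1" "\<lambda>i. a$i" "\<lambda>i. a$i*b$i"] i1 ia iab by simp
  define X where "X = (\<chi> i. xx$i + yy$i + ((1+a$i)*b$i + (1+a$i)*((1+p$i)*q$i) + b$i*((1+p$i)*q$i)))"
  have "((\<chi> i. p$i + q$i), (\<chi> i. a$i + b$i + (1+p$i)*q$i), X) \<in> code_C C2"
  using P Q unfolding code_C_iff[of p a xx] code_C_iff[of q b yy]
  proof (elim disjE conjE)
    assume h: "p = 0" "xx \<in> even_weight" "q = 0" "yy \<in> even_weight"
    have e1: "(\<chi> i. p$i + q$i) = 0" using h by (simp add: vec_eq_iff)
    have e2: "(\<chi> i. a$i + b$i + (1+p$i)*q$i) = a + b" using h by (simp add: vec_eq_iff)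
    have e3: "(\<Sum>i\<in>UNIV. X$i) = (\<Sum>i\<in>UNIV. xx$i + yy$i + (b$i + a$i*b$i))"
    proof (rule sum.cong[OF refl])
      fix i show "X$i = xx$i + yy$i + (b$i + a$i*b$i)"
        unfolding X_def using h bit_cases[of "a$i"] bit_cases[of "b$i"] by auto
    qed
    show ?thesis using h ab s0 e1 e2 e3 by (simp add: code_C_iff even_weight_def odd_weight_def)
  next
    assume h: "p = (\<chi> i. 1)" "xx \<in> odd_weight" "q = 0" "yy \<in> even_weight"
    have e1: "(\<chi> i. p$i + q$i) = (\<chi> i. 1)" using h by (simp add: vec_eq_iff)
    have e2: "(\<chi> i. a$i + b$i + (1+p$i)*q$i) = a + b" using h by (simp add: vec_eq_iff)
    have e3: "(\<Sum>i\<in>UNIV. X$i) = (\<Sum>i\<in>UNIV. xx$i + yy$i + (b$i + a$i*b$i))"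
    proof (rule sum.cong[OF refl])
      fix i show "X$i = xx$i + yy$i + (b$i + a$i*b$i)"
        unfolding X_def using h bit_cases[of "a$i"] bit_cases[of "b$i"] by auto
    qed
    show ?thesis using h ab s0 e1 e2 e3 by (simp add: code_C_iff even_weight_def odd_weight_def)
  next
    assume h: "p = 0" "xx \<in> even_weight" "q = (\<chi> i. 1)" "yy \<in> odd_weight"
    have e1: "(\<chi> i. p$i + q$i) = (\<chi> i. 1)" using h by (simp add: vec_eq_iff)
    have e2: "(\<chi> i. a$i + b$i + (1+p$i)*q$i) = a + b + (\<chi> i. 1)" using h by (simp add: vec_eq_iff)
    have e3: "(\<Sum>i\<in>UNIV. X$i) = (\<Sum>i\<in>UNIV. xx$i + yy$i + (1 + a$i + a$i*b$i))"
    proof (rule sum.cong[OF refl])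
      fix i show "X$i = xx$i + yy$i + (1 + a$i + a$i*b$i)"
        unfolding X_def using h bit_cases[of "a$i"] bit_cases[of "b$i"] by auto
    qed
    show ?thesis using h ab1 s1 e1 e2 e3 by (simp add: code_C_iff even_weight_def odd_weight_def)
  next
    assume h: "p = (\<chi> i. 1)" "xx \<in> odd_weight" "q = (\<chi> i. 1)" "yy \<in> odd_weight"
    have e1: "(\<chi> i. p$i + q$i) = 0" using h by (simp add: vec_eq_iff)
    have e2: "(\<chi> i. a$i + b$i + (1+p$i)*q$i) = a + b" using h by (simp add: vec_eq_iff)
    have e3: "(\<Sum>i\<in>UNIV. X$i) = (\<Sum>i\<in>UNIV. xx$i + yy$i + (b$i + a$i*b$i))"
    proof (rule sum.cong[OF refl])
      fix i show "X$i = xx$i + yy$i + (b$i + a$i*b$i)"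
        unfolding X_def using h bit_cases[of "a$i"] bit_cases[of "b$i"] by auto
    qed
    show ?thesis using h ab s0 e1 e2 e3 by (simp add: code_C_iff even_weight_def odd_weight_def)
  qed
  then show ?thesis by (simp only: X_def)
qed



lemma G_zgrp:
  fixes C2 :: "(bit^'n) set"
  assumes lin: "binary_linear_code C2" and so: "self_orthogonal C2" and one: "(\<chi> i. 1) \<in> C2"
  shows "zgrp (Gamma_Cstar (code_C C2))"
  unfolding zgrp_def
proof (intro conjI ballI)
  have "(0, 0, 0) \<in> code_C C2" using lin unfolding code_C_iff binary_linear_code_def even_weight_def by simp
  moreover have "(0::real^'n) = (\<chi> i. of_bit ((0::bit^'n)$i) + 2 * of_bit ((0::bit^'n)$i) + 4 * of_bit ((0::bit^'n)$i) + 8 * of_int ((0::int^'n)$i))"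
    by (simp add: vec_eq_iff)
  ultimately show "0 \<in> Gamma_Cstar (code_C C2)" unfolding Gamma_mem by blast
next
  fix x y assume x: "x \<in> Gamma_Cstar (code_C C2)" and y: "y \<in> Gamma_Cstar (code_C C2)"
  obtain p a xx z where P: "(p,a,xx) \<in> code_C C2" and xe: "x = (\<chi> i. of_bit (p$i) + 2 * of_bit (a$i) + 4 * of_bit (xx$i) + 8 * of_int (z$i))"
    using x unfolding Gamma_mem by blast
  obtain q b yy z' where Q: "(q,b,yy) \<in> code_C C2" and ye: "y = (\<chi> i. of_bit (q$i) + 2 * of_bit (b$i) + 4 * of_bit (yy$i) + 8 * of_int (z'$i))"
    using y unfolding Gamma_mem by blast
  have "\<forall>i. \<exists>zz::int. ((of_bit (p$i) + 2 * of_bit (a$i) + 4 * of_bit (xx$i) + 8 * of_int (z$i)) - (of_bit (q$i) + 2 * of_bit (b$i) + 4 * of_bit (yy$i) + 8 * of_int (z'$i)) :: real)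
   = of_bit (p$i+q$i) + 2 * of_bit (a$i+b$i+(1+p$i)*q$i) + 4 * of_bit (xx$i+yy$i+((1+a$i)*b$i + (1+a$i)*((1+p$i)*q$i) + b$i*((1+p$i)*q$i))) + 8 * of_int zz"
    using coord_real by blast
  then obtain Z where Z: "\<And>i. ((of_bit (p$i) + 2 * of_bit (a$i) + 4 * of_bit (xx$i) + 8 * of_int (z$i)) - (of_bit (q$i) + 2 * of_bit (b$i) + 4 * of_bit (yy$i) + 8 * of_int (z'$i)) :: real)
   = of_bit (p$i+q$i) + 2 * of_bit (a$i+b$i+(1+p$i)*q$i) + 4 * of_bit (xx$i+yy$i+((1+a$i)*b$i + (1+a$i)*((1+p$i)*q$i) + b$i*((1+p$i)*q$i))) + 8 * of_int (Z i)"
    by metis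
  have C: "((\<chi> i. p$i + q$i), (\<chi> i. a$i + b$i + (1+p$i)*q$i),
     (\<chi> i. xx$i + yy$i + ((1+a$i)*b$i + (1+a$i)*((1+p$i)*q$i) + b$i*((1+p$i)*q$i)))) \<in> code_C C2"
    using code_sub[OF lin so one P Q] .
  have "x - y = (\<chi> i. of_bit ((\<chi> i. p$i + q$i)$i) + 2 * of_bit ((\<chi> i. a$i + b$i + (1+p$i)*q$i)$i)
      + 4 * of_bit ((\<chi> i. xx$i + yy$i + ((1+a$i)*b$i + (1+a$i)*((1+p$i)*q$i) + b$i*((1+p$i)*q$i)))$i) + 8 * of_int ((\<chi> i. Z i)$i))"
    unfolding xe ye vec_eq_iff using Z by simp
  then show "x - y \<in> Gamma_Cstar (code_C C2)" using C unfolding Gamma_mem by blast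
qed

lemma fwd_one:
  fixes C2 :: "(bit^'n) set"
  assumes lin: "binary_linear_code C2" and lat: "is_lattice (Gamma_Cstar (code_C C2))"
  shows "(\<chi> i. 1) \<in> C2"
proof -
  obtain i0 :: 'n where True by blast
  define e :: "bit^'n" where "e = (\<chi> i. if i = i0 then 1 else 0)"
  have eo: "e \<in> odd_weight" unfolding odd_weight_def e_def by simp
  have "0 \<in> C2" using lin unfolding binary_linear_code_def by blast
  then have cw: "((\<chi> i. 1), 0, e) \<in> code_C C2" using eo unfolding code_C_iff by simp
  define W :: "real^'n" where "W = (\<chi> i. of_bit ((\<chi> i. (1::bit))$i) + 2 * of_bit ((0::bit^'n)$i) + 4 * of_bit (e$i) + 8 * of_int ((0::int^'n)$i))"
  have "W \<in> Gamma_Cstar (code_C C2)" unfolding Gamma_mem W_def using cw by blast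
  then have "W + W \<in> Gamma_Cstar (code_C C2)" using lattice_add[OF lat] by blast
  then obtain c1 c2 c3 z where cc: "(c1,c2,c3) \<in> code_C C2" and
    wz: "W + W = (\<chi> i. of_bit (c1$i) + 2 * of_bit (c2$i) + 4 * of_bit (c3$i) + 8 * of_int (z$i))"
    unfolding Gamma_mem by blast
  have "c2$i = 1" for i
  proof -
    have "(W+W)$i = of_bit (0::bit) + 2 * of_bit (1::bit) + 4 * of_bit (0::bit) + 8 * of_int (if i = i0 then 1 else 0)"
      by (simp add: W_def e_def)
    then have "of_bit (c1$i) + 2 * of_bit (c2$i) + 4 * of_bit (c3$i) + 8 * of_int (z$i)
        = (of_bit (0::bit) + 2 * of_bit (1::bit) + 4 * of_bit (0::bit) + 8 * of_int (if i = i0 then 1 else 0) :: real)"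
      using wz by simp
    from dig_unique[OF this] show ?thesis by simp
  qed
  then have "c2 = (\<chi> i. 1)" by (simp add: vec_eq_iff)
  then show ?thesis using cc unfolding code_C_iff by auto
qed

lemma fwd_so:
  fixes C2 :: "(bit^'n) set"
  assumes lin: "binary_linear_code C2" and lat: "is_lattice (Gamma_Cstar (code_C C2))"
  shows "self_orthogonal C2"
  unfolding self_orthogonal_def binary_dual_def
proof (intro subsetI CollectI ballI)
  fix a b assume aC: "a \<in> C2" and bC: "b \<in> C2"
  have ev0: "(0::bit^'n) \<in> even_weight" unfolding even_weight_def by simp
  define V :: "bit^'n \<Rightarrow> real^'n" where "V = (\<lambda>c. (\<chi> i. of_bit ((0::bit^'n)$i) + 2 * of_bit (c$i) + 4 * of_bit ((0::bit^'n)$i) + 8 * of_int ((0::int^'n)$i)))"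
  have "V c \<in> Gamma_Cstar (code_C C2)" if "c \<in> C2" for c
  proof -
    have "(0, c, 0) \<in> code_C C2" using that ev0 unfolding code_C_iff by simp
    then show ?thesis unfolding Gamma_mem V_def by blast
  qed
  then have "V a + V b \<in> Gamma_Cstar (code_C C2)" using lattice_add[OF lat] aC bC by blast
  then obtain c1 c2 c3 z where cc: "(c1,c2,c3) \<in> code_C C2" and
    wz: "V a + V b = (\<chi> i. of_bit (c1$i) + 2 * of_bit (c2$i) + 4 * of_bit (c3$i) + 8 * of_int (z$i))"
    unfolding Gamma_mem by blast
  have "c1$i = 0 \<and> c3$i = a$i * b$i" for i
  proof -
    have "(V a + V b)$i = of_bit (0::bit) + 2 * of_bit (a$i + b$i) + 4 * of_bit (a$i * b$i) + 8 * of_int (0::int)"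
      unfolding V_def using bit_cases[of "a$i"] bit_cases[of "b$i"] by auto
    then have "of_bit (c1$i) + 2 * of_bit (c2$i) + 4 * of_bit (c3$i) + 8 * of_int (z$i)
        = (of_bit (0::bit) + 2 * of_bit (a$i + b$i) + 4 * of_bit (a$i * b$i) + 8 * of_int (0::int) :: real)"
      using wz by simp
    from dig_unique[OF this] show ?thesis by simp
  qed
  then have c1: "c1 = 0" and c3: "c3 = (\<chi> i. a$i * b$i)" by (simp_all add: vec_eq_iff)
  have "c1 \<noteq> (\<chi> i. 1)" using c1 by (simp add: vec_eq_iff)
  then have "c3 \<in> even_weight" using cc unfolding code_C_iff by auto
  then show "binary_inner a b = 0" using c3 unfolding even_weight_def binary_inner_def by simp
qed

theorem theorem2:
  fixes C2 :: "(bit^'n) set"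
  assumes "binary_linear_code C2"
  shows "is_lattice (Gamma_Cstar (code_C C2)) \<longleftrightarrow> self_orthogonal C2 \<and> (\<chi> i. 1) \<in> C2"
proof
  assume "is_lattice (Gamma_Cstar (code_C C2))"
  then show "self_orthogonal C2 \<and> (\<chi> i. 1) \<in> C2" using fwd_so fwd_one assms by blast
next
  assume h: "self_orthogonal C2 \<and> (\<chi> i. 1) \<in> C2"
  have g: "zgrp (Gamma_Cstar (code_C C2))" using G_zgrp assms h by blast
  have "\<exists>B. independent B \<and> finite B \<and> Gamma_Cstar (code_C C2) = ispan B"
    by (rule main_gen[of UNIV]) (use g Gamma_ints in auto)
  then show "is_lattice (Gamma_Cstar (code_C C2))" unfolding lattice_ispan .
qed

end
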